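(* Let $T_1,T_2$ be $2\times 2$ matrices with entries in $\{0,1\}$, neither having a zero row, and let $\alpha_i=T_1^{(i)}\otimes T_2^{(i)}$ for $i=1,2$. If $|\alpha_1|=|\alpha_2|=1$, then $h(T)=0$.
   Context: $T_k^{(i)}$ denotes the $i$-th row of $T_k$, and for $v=(v_1,v_2)$, $w=(w_1,w_2)$ the dyadic product is $v\otimes w=(v_1w_1,v_1w_2,v_2w_1,v_2w_2)$; $|\alpha_i|$ is the sum of the entries of $\alpha_i$ (the number of ones). Define sequences $\gamma^{[s_j]}_{i,n}$ ($i,j\in\{1,2\}$, $n\ge0$) by $\gamma^{[s_j]}_{i,0}=1$ and, for $n\ge1$, $$\gamma^{[s_1]}_{i,n}=\sum_{j,k=1}^2T_1(i,j)T_2(i,k)\,\gamma^{[s_1]}_{j,n-1}\gamma^{[s_2]}_{k,n-1},\qquad \gamma^{[s_2]}_{i,n}=\sum_{j=1}^2T_1(i,j)\,\gamma^{[s_1]}_{j,n-1}.$$ (These are the paper's counts of admissible blocks with root symbol $i$ for the $G$-vertex shift $X_T=\{t\in\{1,2\}^G: T_k(t_g,t_{gs_k})=1\}$ on the monoid $G=\langle s_1,s_2\mid s_2s_2=s_2\rangle$.) Let $l_0=1$, $l_1=2$, $l_{k+1}=l_k+l_{k-1}$ and $|E_n|=\sum_{k=0}^n l_k$ (the number of elements of $G$ of word length at most $n$). The entropy is $h(T)=\limsup_{n\to\infty}\frac{\ln(\gamma^{[s_1]}_{1,n}+\gamma^{[s_1]}_{2,n})}{|E_n|}$. *)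

theory Defs
  imports Complex_Main "HOL-Library.Extended_Real"
begin

(* A 2x2 matrix is represented as a function nat => nat => nat; only the
   indices 1,2 are relevant.  T i j is the (i,j) entry. *)
type_synonym mat2 = "nat \<Rightarrow> nat \<Rightarrow> nat"

definition zero_one_mat :: "mat2 \<Rightarrow> bool" where
  "zero_one_mat T \<longleftrightarrow> (\<forall>i\<in>{1,2}. \<forall>j\<in>{1,2}. T i j \<in> {0,1})"

definition no_zero_row :: "mat2 \<Rightarrow> bool" where
  "no_zero_row T \<longleftrightarrow> (\<forall>i\<in>{1,2}. \<exists>j\<in>{1,2}. T i j \<noteq> 0)"

definition dyadic :: "nat \<times> nat \<Rightarrow> nat \<times> nat \<Rightarrow> nat list" where
  "dyadic v w = [fst v * fst w, fst v * snd w, snd v * fst w, snd v * snd w]"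

definition row :: "mat2 \<Rightarrow> nat \<Rightarrow> nat \<times> nat" where
  "row T i = (T i 1, T i 2)"

definition alpha :: "mat2 \<Rightarrow> mat2 \<Rightarrow> nat \<Rightarrow> nat list" where
  "alpha T1 T2 i = dyadic (row T1 i) (row T2 i)"

definition weight :: "nat list \<Rightarrow> nat" where
  "weight a = sum_list a"

fun gam :: "mat2 \<Rightarrow> mat2 \<Rightarrow> nat \<Rightarrow> (nat \<Rightarrow> nat) \<times> (nat \<Rightarrow> nat)" where
  "gam T1 T2 0 = ((\<lambda>i. 1), (\<lambda>i. 1))"
| "gam T1 T2 (Suc n) =
     (let (g1, g2) = gam T1 T2 n in
       ((\<lambda>i. \<Sum>j\<in>{1,2}. \<Sum>k\<in>{1,2}. T1 i j * T2 i k * g1 j * g2 k),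
        (\<lambda>i. \<Sum>j\<in>{1,2}. T1 i j * g1 j)))"

definition gamma_s1 :: "mat2 \<Rightarrow> mat2 \<Rightarrow> nat \<Rightarrow> nat \<Rightarrow> nat" where
  "gamma_s1 T1 T2 i n = fst (gam T1 T2 n) i"

definition gamma_s2 :: "mat2 \<Rightarrow> mat2 \<Rightarrow> nat \<Rightarrow> nat \<Rightarrow> nat" where
  "gamma_s2 T1 T2 i n = snd (gam T1 T2 n) i"

fun lseq :: "nat \<Rightarrow> nat" where
  "lseq 0 = 1"
| "lseq (Suc 0) = 2"
| "lseq (Suc (Suc k)) = lseq (Suc k) + lseq k"

definition card_E :: "nat \<Rightarrow> nat" where
  "card_E n = (\<Sum>k\<le>n. lseq k)"

definition entropy :: "mat2 \<Rightarrow> mat2 \<Rightarrow> ereal" where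
  "entropy T1 T2 = limsup (\<lambda>n. ereal (ln (real (gamma_s1 T1 T2 1 n + gamma_s1 T1 T2 2 n)) / real (card_E n)))"

end

theory Submission
  imports Defs
begin

lemma lseq_pos: "lseq k \<ge> 1"
  by (induction k rule: lseq.induct) auto

lemma card_E_ge: "card_E n \<ge> n + 1"
proof -
  have "(\<Sum>k\<le>n. (1::nat)) \<le> (\<Sum>k\<le>n. lseq k)"
    using lseq_pos by (intro sum_mono) (simp add: Suc_le_eq)
  then show ?thesis by (simp add: card_E_def)
qed

lemma gam_one:
  assumes r1: "\<And>i. i \<in> {1,2} \<Longrightarrow> T1 i 1 + T1 i 2 = 1"
      and r2: "\<And>i. i \<in> {1,2} \<Longrightarrow> T2 i 1 + T2 i 2 = 1"
  shows "\<forall>i\<in>{1,2::nat}. fst (gam T1 T2 n) i = 1 \<and> snd (gam T1 T2 n) i = 1"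
proof (induction n)
  case 0
  then show ?case by simp
next
  case (Suc n)
  obtain g1 g2 where g: "gam T1 T2 n = (g1, g2)" by fastforce
  have h: "g1 1 = 1" "g1 2 = 1" "g2 1 = 1" "g2 2 = 1" using Suc g by auto
  show ?case
  proof
    fix i :: nat assume i: "i \<in> {1,2}"
    have a: "T1 i 1 + T1 i 2 = 1" "T2 i 1 + T2 i 2 = 1" using r1[OF i] r2[OF i] by auto
    have "(\<Sum>j\<in>{1,2::nat}. \<Sum>k\<in>{1,2::nat}. T1 i j * T2 i k * g1 j * g2 k)
          = (T1 i 1 + T1 i 2) * (T2 i 1 + T2 i 2)"
      using h by (simp add: algebra_simps)
    also have "\<dots> = 1" using a by simp
    finally have f: "(\<Sum>j\<in>{1,2::nat}. \<Sum>k\<in>{1,2::nat}. T1 i j * T2 i k * g1 j * g2 k) = 1" .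
    have s: "(\<Sum>j\<in>{1,2::nat}. T1 i j * g1 j) = 1" using h a by simp
    show "fst (gam T1 T2 (Suc n)) i = 1 \<and> snd (gam T1 T2 (Suc n)) i = 1"
      using f s g by simp
  qed
qed

lemma row_sum:
  assumes "weight (alpha T1 T2 i) = 1"
  shows "T1 i 1 + T1 i 2 = 1" "T2 i 1 + T2 i 2 = 1"
proof -
  have "(T1 i 1 + T1 i 2) * (T2 i 1 + T2 i 2) = 1"
    using assms by (simp add: weight_def alpha_def dyadic_def row_def algebra_simps)
  then show "T1 i 1 + T1 i 2 = 1" "T2 i 1 + T2 i 2 = 1" by simp_all
qed

theorem proposition1:
  fixes T1 T2 :: mat2
  assumes "zero_one_mat T1" and "zero_one_mat T2"
    and "no_zero_row T1" and "no_zero_row T2"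
    and "weight (alpha T1 T2 1) = 1" and "weight (alpha T1 T2 2) = 1"
  shows "entropy T1 T2 = 0"
proof -
  have r1: "T1 i 1 + T1 i 2 = 1" if "i \<in> {1,2}" for i
    using row_sum[OF assms(5)] row_sum[OF assms(6)] that by auto
  have r2: "T2 i 1 + T2 i 2 = 1" if "i \<in> {1,2}" for i
    using row_sum[OF assms(5)] row_sum[OF assms(6)] that by auto
  have g: "\<And>n. gamma_s1 T1 T2 1 n + gamma_s1 T1 T2 2 n = 2"
    using gam_one[of T1 T2, OF r1 r2] by (simp add: gamma_s1_def)
  have lim: "(\<lambda>n. ln (real 2) / real (card_E n)) \<longlonglongrightarrow> 0"
  proof -
    have "filterlim (\<lambda>n. real (card_E n)) at_top sequentially"
    proof (rule filterlim_at_top_mono[OF filterlim_real_sequentially])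
      show "\<forall>\<^sub>F n in sequentially. real n \<le> real (card_E n)"
        using card_E_ge by (intro always_eventually allI) (metis Suc_leD Suc_eq_plus1 of_nat_le_iff)
    qed
    then show ?thesis by (intro tendsto_divide_0[OF tendsto_const]) (rule filterlim_at_top_imp_at_infinity)
  qed
  have "(\<lambda>n. ereal (ln (real 2) / real (card_E n))) \<longlonglongrightarrow> ereal 0"
    using lim by (rule tendsto_ereal)
  then have "limsup (\<lambda>n. ereal (ln (real 2) / real (card_E n))) = ereal 0"
    by (intro lim_imp_Limsup) simp_all
  then show ?thesis unfolding entropy_def g by (simp add: zero_ereal_def)
qed

end
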